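(* Let $N\in\mathbb N$, let $T$ be an $N$-valid tree, and let $\tilde T$ and $\Gamma$ be the tree and digraph constructed from $T$ as described in the context. Let $m_0$ be a mask whose values $\lambda_{\mathbf c_1,\dots,\mathbf c_{N+1}}$ are compatible with $T$. Define $N$-dimensional arrays $A^{(n)}=(a^{(n)}_{\mathbf i_1,\dots,\mathbf i_N})_{\mathbf i_1,\dots,\mathbf i_N\in GF(p^s)}$, $n=0,1,2,\dots$, by $$a^{(0)}_{\mathbf i_1,\dots,\mathbf i_N}=\lambda_{\mathbf i_1,\dots,\mathbf i_N,\mathbf 0}\,\lambda_{\mathbf i_2,\dots,\mathbf i_N,\mathbf 0,\mathbf 0}\cdots\lambda_{\mathbf i_N,\mathbf 0,\dots,\mathbf 0},\qquad a^{(n)}_{\mathbf i_1,\dots,\mathbf i_N}=\sum_{\mathbf j\in GF(p^s)}\lambda_{\mathbf i_1,\dots,\mathbf i_N,\mathbf j}\,a^{(n-1)}_{\mathbf i_2,\dots,\mathbf i_N,\mathbf j}\ (n\ge1).$$ Then for every $n\ge0$ and every vertex $(\mathbf i_1,\dots,\mathbf i_N)$ of $\tilde T$ of level $l\le N+n$ one has $a^{(n)}_{\mathbf i_1,\dots,\mathbf i_N}=1$.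
   Context: Let $p$ be a prime, $s\in\mathbb N$, and $GF(p^s)$ the field with $p^s$ elements; each $\mathbf u\in GF(p^s)$ is identified with a vector $(u^{(0)},\dots,u^{(s-1)})\in\{0,\dots,p-1\}^s$ via a fixed basis over $GF(p)$, and $\mathbf 0$ denotes the zero element. The local field $F^{(s)}$ of characteristic $p$ is the field of formal Laurent series $\sum_{j\ge k}\mathbf x_j t^j$, $\mathbf x_j\in GF(p^s)$, identified with two-sided sequences $x=(\mathbf x_j)_{j\in\mathbb Z}$ having only finitely many nonzero $\mathbf x_j$ with $j<0$. For $\mathbf a\in GF(p^s)$ and $k\in\mathbb Z$, $\mathbf a g_k$ denotes the sequence with entry $\mathbf a$ at position $k$ and $\mathbf 0$ elsewhere. The dilation is $\mathcal A(\sum_n \mathbf x_n g_n)=\sum_n\mathbf x_n g_{n-1}$. For $\mathbf u\in GF(p^s)$, $k\in\mathbb Z$, the Rademacher character is $\mathbf r_k^{\mathbf u}(x)=\exp\big(\tfrac{2\pi i}{p}\sum_{l=0}^{s-1}u^{(l)}x_k^{(l)}\big)$. Every continuous character of the additive group of $F^{(s)}$ is uniquely $\chi=\prod_{k\in\mathbb Z}\mathbf r_k^{\mathbf b_k}$ with $\mathbf b_k=\mathbf 0$ for all sufficiently large $k$; write $(\chi,x)=\chi(x)$ and let $\chi\mathcal A^{j}$ be the character $x\mapsto\chi(\mathcal A^{j}x)$. For $\mathbf a_{-N},\dots,\mathbf a_0\in GF(p^s)$ let $C(\mathbf a_{-N},\dots,\mathbf a_0)$ be the set of characters $\prod_k\mathbf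 r_k^{\mathbf b_k}$ with $\mathbf b_k=\mathbf a_k$ for $-N\le k\le 0$ and $\mathbf b_k=\mathbf 0$ for $k\ge1$ (the coset $(F^{(s)}_{-N})^\perp\mathbf r_{-N}^{\mathbf a_{-N}}\cdots\mathbf r_0^{\mathbf a_0}$). Mask: let $H_0^{(N+1)}=\{\mathbf a_{-1}g_{-1}\dot+\cdots\dot+\mathbf a_{-(N+1)}g_{-(N+1)}:\mathbf a_i\in GF(p^s)\}$. A mask is a function $m_0(\chi)=\frac1p\sum_{h\in H_0^{(N+1)}}\beta_h\overline{(\chi\mathcal A^{-1},h)}$ with $\beta_h\in\mathbb C$; it is constant on each set $C(\mathbf a_{-N},\dots,\mathbf a_0)$, and we put $\lambda_{\mathbf a_{-N},\dots,\mathbf a_0}=|m_0(\chi)|^2$ for $\chi\in C(\mathbf a_{-N},\dots,\mathbf a_0)$ (an array indexed by $GF(p^s)^{N+1}$). Trees: consider a finite rooted tree $T$ whose vertices carry labels, with arcs directed from each non-root vertex to its parent; the level of a vertex is its distance to the root. $T$ is $N$-valid if (1) every label is an element of $GF(p^s)$; (2) the root and all vertices of levels $1,\dots,N-1$ have label $\mathbf 0$; (3) for every $(\mathbf c_1,\dots,\mathbf c_N)\in GF(p^s)^N$ there is exactly one directed path $v_1\to v_2\to\cdots\to v_N$ in $T$ ($v_{i+1}$ the parent of $v_i$) whose labels are $\mathbf c_1,\dots,\mathbf c_N$. The tree $\tilde T$ has as vertices the label tuples $(\mathbf c_1,\dots,\mathbf c_N)$ of such paths, with an arc from the tuple of the path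 starting at $v$ to the tuple of the path starting at the parent of $v$; its root is $(\mathbf 0,\dots,\mathbf 0)$ and the level of a tuple in $\tilde T$ equals (level of $v_1$ in $T$) $-(N-1)$. The digraph $\Gamma$ has the same vertices; for a vertex $B=(\mathbf b_1,\dots,\mathbf b_N)$ its successor set is $D(B)=\{\mathbf d\in GF(p^s): (\mathbf b_2,\dots,\mathbf b_N,\mathbf d)$ is a vertex of $\tilde T$ of level strictly less than the level of $B\}$, and $B$ is connected in $\Gamma$ to each $(\mathbf b_2,\dots,\mathbf b_N,\mathbf d)$, $\mathbf d\in D(B)$. The values $\lambda$ are compatible with $T$ if: $\lambda_{\mathbf 0,\dots,\mathbf 0}=1$ and $\lambda_{\mathbf 0,\dots,\mathbf 0,\mathbf d}=0$ for $\mathbf d\ne\mathbf 0$; and for every vertex $B=(\mathbf b_1,\dots,\mathbf b_N)\ne(\mathbf 0,\dots,\mathbf 0)$ of $\tilde T$, $\sum_{\mathbf d\in D(B)}\lambda_{\mathbf b_1,\dots,\mathbf b_N,\mathbf d}=1$ and $\lambda_{\mathbf b_1,\dots,\mathbf b_N,\mathbf d}=0$ for $\mathbf d\notin D(B)$. The component $a_{\mathbf i_1,\dots,\mathbf i_N}$ of an $N$-dimensional array is said to correspond to the vertex $(\mathbf i_1,\dots,\mathbf i_N)$. *)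

theory Defs
  imports Complex_Main "HOL-Computational_Algebra.Primes"
begin

text \<open>An element u of GF(p^s) is identified with its coordinate vector
  (u^(0),...,u^(s-1)) in {0,...,p-1}^s, represented as a list of length s.
  Only the additive structure (through the characters) and the zero element
  are used in the statement.\<close>

definition GF :: "nat \<Rightarrow> nat \<Rightarrow> nat list set" where
  "GF p s = {u. length u = s \<and> (\<forall>x\<in>set u. x < p)}"

definition gzero :: "nat \<Rightarrow> nat list" where
  "gzero s = replicate s 0"

definition tuples :: "nat \<Rightarrow> nat \<Rightarrow> nat \<Rightarrow> nat list list set" where
  "tuples p s N = {cs. length cs = N \<and> set cs \<subseteq> GF p s}"

definition gip :: "nat \<Rightarrow> nat list \<Rightarrow> nat list \<Rightarrow> nat" where
  "gip s u v = (\<Sum>l<s. u ! l * v ! l)"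

text \<open>An element h = a_{-1} g_{-1} + ... + a_{-(N+1)} g_{-(N+1)} of H_0^(N+1)
  is represented by the list [a_{-1}, ..., a_{-(N+1)}].  A coset
  C(a_{-N},...,a_0) is represented by the list cs = [a_{-N},...,a_0].
  For chi in that coset, (chi A^{-1}, h) = chi(A^{-1} h), and A^{-1} h has entry
  a_{k-1} at position k (k = -N..0); hence
  (chi A^{-1}, h) = exp(2 pi i/p * sum_{k=-N}^{0} sum_l b_k^(l) a_{k-1}^(l)),
  i.e. pairing cs!i with (rev h)!i for i = 0..N.\<close>
definition char_val :: "nat \<Rightarrow> nat \<Rightarrow> nat \<Rightarrow> nat list list \<Rightarrow> nat list list \<Rightarrow> complex" where
  "char_val p s N cs h =
     exp (2 * pi * \<i> * of_nat (\<Sum>i\<le>N. gip s (cs ! i) (rev h ! i)) / of_nat p)"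

definition mask_m0 :: "nat \<Rightarrow> nat \<Rightarrow> nat \<Rightarrow> (nat list list \<Rightarrow> complex) \<Rightarrow> nat list list \<Rightarrow> complex" where
  "mask_m0 p s N \<beta> cs =
     (1 / of_nat p) * (\<Sum>h\<in>tuples p s (N+1). \<beta> h * cnj (char_val p s N cs h))"

definition mask_lambda :: "nat \<Rightarrow> nat \<Rightarrow> nat \<Rightarrow> (nat list list \<Rightarrow> complex) \<Rightarrow> nat list list \<Rightarrow> real" where
  "mask_lambda p s N \<beta> cs = (cmod (mask_m0 p s N \<beta> cs))\<^sup>2"

text \<open>A finite rooted tree: vertex set V, root r, parent map par (arcs go from a
  vertex to its parent; by convention par r = r, the root having no parent).\<close>
definition rooted_tree :: "'v set \<Rightarrow> 'v \<Rightarrow> ('v \<Rightarrow> 'v) \<Rightarrow> bool" where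
  "rooted_tree V r par \<longleftrightarrow> finite V \<and> r \<in> V \<and> par r = r \<and>
     (\<forall>v\<in>V. par v \<in> V) \<and> (\<forall>v\<in>V. \<exists>k. (par ^^ k) v = r)"

definition level :: "'v \<Rightarrow> ('v \<Rightarrow> 'v) \<Rightarrow> 'v \<Rightarrow> nat" where
  "level r par v = (LEAST k. (par ^^ k) v = r)"

definition path_labels :: "('v \<Rightarrow> 'v) \<Rightarrow> ('v \<Rightarrow> nat list) \<Rightarrow> nat \<Rightarrow> 'v \<Rightarrow> nat list list" where
  "path_labels par lab N v = map (\<lambda>i. lab ((par ^^ i) v)) [0..<N]"

text \<open>A directed path v_1 -> ... -> v_N exists in T iff v_1,...,v_{N-1} are not
  the root, i.e. level v_1 >= N-1; it is determined by its start v_1.\<close>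
definition valid_tree :: "nat \<Rightarrow> nat \<Rightarrow> nat \<Rightarrow> 'v set \<Rightarrow> 'v \<Rightarrow> ('v \<Rightarrow> 'v) \<Rightarrow> ('v \<Rightarrow> nat list) \<Rightarrow> bool" where
  "valid_tree p s N V r par lab \<longleftrightarrow>
     rooted_tree V r par \<and>
     (\<forall>v\<in>V. lab v \<in> GF p s) \<and>
     (\<forall>v\<in>V. level r par v \<le> N - 1 \<longrightarrow> lab v = gzero s) \<and>
     (\<forall>c\<in>tuples p s N. \<exists>!v. v \<in> V \<and> N - 1 \<le> level r par v \<and> path_labels par lab N v = c)"

definition tilde_level :: "nat \<Rightarrow> 'v set \<Rightarrow> 'v \<Rightarrow> ('v \<Rightarrow> 'v) \<Rightarrow> ('v \<Rightarrow> nat list) \<Rightarrow> nat list list \<Rightarrow> nat" where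
  "tilde_level N V r par lab c =
     level r par (THE v. v \<in> V \<and> N - 1 \<le> level r par v \<and> path_labels par lab N v = c) - (N - 1)"

definition Dset :: "nat \<Rightarrow> nat \<Rightarrow> nat \<Rightarrow> 'v set \<Rightarrow> 'v \<Rightarrow> ('v \<Rightarrow> 'v) \<Rightarrow> ('v \<Rightarrow> nat list) \<Rightarrow> nat list list \<Rightarrow> nat list set" where
  "Dset p s N V r par lab B =
     {d \<in> GF p s. tilde_level N V r par lab (tl B @ [d]) < tilde_level N V r par lab B}"

definition compatible :: "nat \<Rightarrow> nat \<Rightarrow> nat \<Rightarrow> 'v set \<Rightarrow> 'v \<Rightarrow> ('v \<Rightarrow> 'v) \<Rightarrow> ('v \<Rightarrow> nat list) \<Rightarrow> (nat list list \<Rightarrow> real) \<Rightarrow> bool" where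
  "compatible p s N V r par lab lam \<longleftrightarrow>
     lam (replicate (N + 1) (gzero s)) = 1 \<and>
     (\<forall>d\<in>GF p s. d \<noteq> gzero s \<longrightarrow> lam (replicate N (gzero s) @ [d]) = 0) \<and>
     (\<forall>B\<in>tuples p s N. B \<noteq> replicate N (gzero s) \<longrightarrow>
        (\<Sum>d\<in>Dset p s N V r par lab B. lam (B @ [d])) = 1 \<and>
        (\<forall>d\<in>GF p s - Dset p s N V r par lab B. lam (B @ [d]) = 0))"

fun arr :: "nat \<Rightarrow> nat \<Rightarrow> nat \<Rightarrow> (nat list list \<Rightarrow> real) \<Rightarrow> nat \<Rightarrow> nat list list \<Rightarrow> real" where
  "arr p s N lam 0 i = (\<Prod>k<N. lam (drop k i @ replicate (k + 1) (gzero s)))"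
| "arr p s N lam (Suc n) i = (\<Sum>j\<in>GF p s. lam (i @ [j]) * arr p s N lam n (tl i @ [j]))"

end

theory Submission
  imports Defs
begin

lemma comp1: "compatible p s N V r par lab lam \<Longrightarrow> lam (replicate (N + 1) (gzero s)) = 1"
  unfolding compatible_def by (elim conjE)
lemma comp2: "compatible p s N V r par lab lam \<Longrightarrow> d \<in> GF p s \<Longrightarrow> d \<noteq> gzero s \<Longrightarrow> lam (replicate N (gzero s) @ [d]) = 0"
  unfolding compatible_def by (elim conjE) simp
lemma comp3: "compatible p s N V r par lab lam \<Longrightarrow> B \<in> tuples p s N \<Longrightarrow> B \<noteq> replicate N (gzero s) \<Longrightarrow>
   (\<Sum>d\<in>Dset p s N V r par lab B. lam (B @ [d])) = 1"
  unfolding compatible_def by (elim conjE) simp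
lemma comp4: "compatible p s N V r par lab lam \<Longrightarrow> B \<in> tuples p s N \<Longrightarrow> B \<noteq> replicate N (gzero s) \<Longrightarrow>
   d \<in> GF p s - Dset p s N V r par lab B \<Longrightarrow> lam (B @ [d]) = 0"
  unfolding compatible_def by (elim conjE) simp

context
  fixes p s N :: nat and V :: "'v set" and r :: 'v and par :: "'v \<Rightarrow> 'v" and lab :: "'v \<Rightarrow> nat list"
  assumes vt: "valid_tree p s N V r par lab" and N1: "1 \<le> N" and p0: "0 < p"
begin

lemmas vtu = vt[unfolded valid_tree_def]
lemma rt: "rooted_tree V r par" using vtu by (rule conjunct1)
lemma vt2: "\<forall>v\<in>V. lab v \<in> GF p s" using vtu[THEN conjunct2] by (rule conjunct1)
lemma vt3: "\<forall>v\<in>V. level r par v \<le> N - 1 \<longrightarrow> lab v = gzero s" using vtu[THEN conjunct2, THEN conjunct2] by (rule conjunct1)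
lemma vt4: "\<forall>c\<in>tuples p s N. \<exists>!v. v \<in> V \<and> N - 1 \<le> level r par v \<and> path_labels par lab N v = c"
  using vtu[THEN conjunct2, THEN conjunct2] by (rule conjunct2)
lemmas rtu = rt[unfolded rooted_tree_def]

lemma lv_root: "level r par r = 0" unfolding level_def by (rule Least_eq_0) simp

lemma lv_reach: "v \<in> V \<Longrightarrow> (par ^^ level r par v) v = r"
  using rt unfolding rooted_tree_def level_def by (metis (mono_tags, lifting) LeastI_ex)

lemma lv_le: "(par ^^ k) v = r \<Longrightarrow> level r par v \<le> k"
  unfolding level_def by (rule Least_le)

lemma par_V: "v \<in> V \<Longrightarrow> par v \<in> V" using rtu by simp

lemma lv_par: assumes "v \<in> V" "v \<noteq> r" shows "level r par (par v) = level r par v - 1"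
proof -
  have A: "(par ^^ level r par v) v = r" by (rule lv_reach[OF assms(1)])
  have "level r par v \<noteq> 0" using A assms(2) by (metis funpow_0)
  then obtain m where m: "level r par v = Suc m" by (cases "level r par v") auto
  have "(par ^^ m) (par v) = r" using A m by (simp add: funpow_Suc_right del: funpow.simps)
  hence le1: "level r par (par v) \<le> m" by (rule lv_le)
  have B: "(par ^^ level r par (par v)) (par v) = r" by (rule lv_reach) (use par_V assms in blast)
  hence "(par ^^ Suc (level r par (par v))) v = r" by (simp add: funpow_Suc_right del: funpow.simps)
  hence "level r par v \<le> Suc (level r par (par v))" by (rule lv_le)
  with le1 m show ?thesis by simp
qed

lemma lv_iter: "v \<in> V \<Longrightarrow> (par ^^ k) v \<in> V \<and> level r par ((par ^^ k) v) = level r par v - k"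
proof (induction k)
  case 0 show ?case using 0 by simp
next
  case (Suc k)
  then have IH: "(par ^^ k) v \<in> V" "level r par ((par ^^ k) v) = level r par v - k" by auto
  have eqS: "(par ^^ Suc k) v = par ((par ^^ k) v)" by simp
  show ?case
  proof (cases "(par ^^ k) v = r")
    case True
    have pr: "par r = r" and rV: "r \<in> V" using rt unfolding rooted_tree_def by blast+
    have "(par ^^ Suc k) v = r" using eqS True pr by simp
    moreover have "level r par v - k = 0" using IH(2) True lv_root by simp
    ultimately show ?thesis using rV lv_root by simp
  next
    case False
    have "level r par (par ((par ^^ k) v)) = level r par ((par ^^ k) v) - 1"
      by (rule lv_par[OF IH(1) False])
    moreover have "par ((par ^^ k) v) \<in> V" by (rule par_V[OF IH(1)])
    ultimately show ?thesis using eqS IH(2) by (simp only:) simp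
  qed
qed

lemma zero_lab: "v \<in> V \<Longrightarrow> level r par v \<le> N - 1 \<Longrightarrow> lab v = gzero s"
  using vt3 by simp

lemma lab_GF: "v \<in> V \<Longrightarrow> lab v \<in> GF p s"
  using vt2 by simp

lemma uniq: "c \<in> tuples p s N \<Longrightarrow> \<exists>!v. v \<in> V \<and> N - 1 \<le> level r par v \<and> path_labels par lab N v = c"
  using vt4 by simp

lemma ex_vert: "c \<in> tuples p s N \<Longrightarrow> \<exists>v. v \<in> V \<and> N - 1 \<le> level r par v \<and> path_labels par lab N v = c"
  using uniq by blast

lemma TL_eq: "c \<in> tuples p s N \<Longrightarrow> v \<in> V \<Longrightarrow> N - 1 \<le> level r par v \<Longrightarrow> path_labels par lab N v = c
   \<Longrightarrow> tilde_level N V r par lab c = level r par v - (N - 1)"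
  unfolding tilde_level_def
  by (subst the1_equality[OF uniq]) auto

lemma pl_nth: "i < N \<Longrightarrow> path_labels par lab N v ! i = lab ((par ^^ i) v)"
  by (simp add: path_labels_def)

lemma pl_len: "length (path_labels par lab N v) = N"
  by (simp add: path_labels_def)

lemma gzero_GF: "gzero s \<in> GF p s" using p0 by (simp add: GF_def gzero_def)

lemma tl_tuple: "c \<in> tuples p s N \<Longrightarrow> d \<in> GF p s \<Longrightarrow> tl c @ [d] \<in> tuples p s N"
  using N1 by (auto simp: tuples_def dest: list.set_sel(2)[rotated])

lemma parent:
  assumes c: "c \<in> tuples p s N" and w: "w \<in> V" "N - 1 \<le> level r par w" "path_labels par lab N w = c"
    and lw: "N \<le> level r par w"
  shows "tl c @ [lab ((par ^^ N) w)] \<in> tuples p s N"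
    "tilde_level N V r par lab (tl c @ [lab ((par ^^ N) w)]) = tilde_level N V r par lab c - 1"
proof -
  have wr: "w \<noteq> r" using lw N1 lv_root by auto
  have pw: "par w \<in> V" using par_V w by blast
  have lpw: "level r par (par w) = level r par w - 1" using lv_par[OF w(1) wr] .
  have "(par ^^ N) w \<in> V" using lv_iter w by blast
  then show T: "tl c @ [lab ((par ^^ N) w)] \<in> tuples p s N" using tl_tuple c lab_GF by blast
  have "path_labels par lab N (par w) = tl c @ [lab ((par ^^ N) w)]"
  proof (rule nth_equalityI)
    show "length (path_labels par lab N (par w)) = length (tl c @ [lab ((par ^^ N) w)])"
      using pl_len w(3) N1 by auto
  next
    fix i assume "i < length (path_labels par lab N (par w))"
    then have i: "i < N" by (simp add: pl_len)
    have L: "path_labels par lab N (par w) ! i = lab ((par ^^ Suc i) w)"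
      using pl_nth[OF i] by (simp add: funpow_Suc_right del: funpow.simps)
    show "path_labels par lab N (par w) ! i = (tl c @ [lab ((par ^^ N) w)]) ! i"
    proof (cases "i < N - 1")
      case True
      then have "(tl c @ [lab ((par ^^ N) w)]) ! i = c ! Suc i"
        using w(3) pl_len[of w] by (simp add: nth_append nth_tl)
      also have "\<dots> = lab ((par ^^ Suc i) w)" using w(3) pl_nth True by auto
      finally show ?thesis using L by simp
    next
      case False
      then have "i = N - 1" using i by simp
      moreover have "length c = N" using w(3) pl_len[of w] by simp
      ultimately show ?thesis using L N1 by (simp add: nth_append)
    qed
  qed
  then have "tilde_level N V r par lab (tl c @ [lab ((par ^^ N) w)]) = level r par (par w) - (N - 1)"
    using TL_eq[OF T pw] lpw lw by simp
  also have "\<dots> = tilde_level N V r par lab c - 1" using TL_eq[OF c w] lpw by simp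
  finally show "tilde_level N V r par lab (tl c @ [lab ((par ^^ N) w)]) = tilde_level N V r par lab c - 1" .
qed

lemma zeros_tuple: "replicate N (gzero s) \<in> tuples p s N"
  using gzero_GF by (auto simp: tuples_def)

lemma TL_zero_iff: assumes c: "c \<in> tuples p s N"
  shows "tilde_level N V r par lab c = 0 \<longleftrightarrow> c = replicate N (gzero s)"
proof
  assume 0: "tilde_level N V r par lab c = 0"
  obtain w where w: "w \<in> V" "N - 1 \<le> level r par w" "path_labels par lab N w = c" using ex_vert c by blast
  have lw: "level r par w = N - 1" using TL_eq[OF c w] 0 w(2) by simp
  show "c = replicate N (gzero s)"
  proof (rule nth_equalityI)
    show "length c = length (replicate N (gzero s))" using w(3) pl_len by auto
  next
    fix i assume "i < length c"
    then have i: "i < N" using w(3) pl_len by auto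
    have "c ! i = lab ((par ^^ i) w)" using w(3) pl_nth[OF i] by auto
    also have "\<dots> = gzero s" using lv_iter[OF w(1), of i] lw zero_lab by auto
    finally show "c ! i = replicate N (gzero s) ! i" using i by simp
  qed
next
  assume cz: "c = replicate N (gzero s)"
  obtain w where w: "w \<in> V" "N - 1 \<le> level r par w" "path_labels par lab N w = c" using ex_vert c by blast
  define u where "u = (par ^^ (level r par w - (N - 1))) w"
  have uV: "u \<in> V" and lu: "level r par u = N - 1"
    using lv_iter[OF w(1), of "level r par w - (N - 1)"] w(2) unfolding u_def by auto
  have pu: "path_labels par lab N u = c"
  proof (rule nth_equalityI)
    show "length (path_labels par lab N u) = length c" using cz pl_len by simp
  next
    fix i assume "i < length (path_labels par lab N u)"
    then have i: "i < N" by (simp add: pl_len)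
    have "path_labels par lab N u ! i = lab ((par ^^ i) u)" using pl_nth[OF i] .
    also have "\<dots> = gzero s" using lv_iter[OF uV, of i] lu zero_lab by auto
    finally show "path_labels par lab N u ! i = c ! i" using i cz by simp
  qed
  show "tilde_level N V r par lab c = 0" using TL_eq[OF c uV _ pu] lu by simp
qed

lemma D_single:
  assumes B: "B \<in> tuples p s N" and le: "tilde_level N V r par lab B \<le> N" and ge: "1 \<le> tilde_level N V r par lab B"
  shows "Dset p s N V r par lab B = {gzero s}"
proof
  show "Dset p s N V r par lab B \<subseteq> {gzero s}"
  proof
    fix d assume "d \<in> Dset p s N V r par lab B"
    then have d: "d \<in> GF p s" and lt: "tilde_level N V r par lab (tl B @ [d]) < tilde_level N V r par lab B"
      by (auto simp: Dset_def)
    have c': "tl B @ [d] \<in> tuples p s N" using tl_tuple B d by blast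
    obtain w where w: "w \<in> V" "N - 1 \<le> level r par w" "path_labels par lab N w = tl B @ [d]"
      using ex_vert c' by blast
    have "d = (tl B @ [d]) ! (N - 1)" using B N1 by (simp add: tuples_def nth_append)
    also have "\<dots> = lab ((par ^^ (N - 1)) w)" using w(3) pl_nth N1 by (metis diff_less zero_less_one less_le_trans)
    also have "\<dots> = gzero s"
      using lv_iter[OF w(1), of "N - 1"] TL_eq[OF c' w] lt le zero_lab by auto
    finally show "d \<in> {gzero s}" by simp
  qed
next
  obtain w where w: "w \<in> V" "N - 1 \<le> level r par w" "path_labels par lab N w = B" using ex_vert B by blast
  have lw: "N \<le> level r par w" using TL_eq[OF B w] ge by simp
  have z: "lab ((par ^^ N) w) = gzero s"
    using lv_iter[OF w(1), of N] TL_eq[OF B w] le zero_lab by auto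
  show "{gzero s} \<subseteq> Dset p s N V r par lab B"
    using parent[OF B w lw] z gzero_GF ge by (auto simp: Dset_def)
qed

lemma lam_one:
  assumes comp: "compatible p s N V r par lab lam" and B: "B \<in> tuples p s N"
    and le: "tilde_level N V r par lab B \<le> N"
  shows "lam (B @ [gzero s]) = 1"
proof (cases "B = replicate N (gzero s)")
  case True
  then have "B @ [gzero s] = replicate (N + 1) (gzero s)" by (simp add: replicate_append_same)
  then show ?thesis using comp1[OF comp] by simp
next
  case False
  then have ge: "1 \<le> tilde_level N V r par lab B" using TL_zero_iff[OF B] by simp
  have "(\<Sum>d\<in>Dset p s N V r par lab B. lam (B @ [d])) = 1" using comp3[OF comp B False] .
  then show ?thesis using D_single[OF B le ge] by simp
qed

lemma chain:
  assumes c: "c \<in> tuples p s N" and le: "tilde_level N V r par lab c \<le> N"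
  shows "k \<le> N \<Longrightarrow> drop k c @ replicate k (gzero s) \<in> tuples p s N \<and>
     tilde_level N V r par lab (drop k c @ replicate k (gzero s)) = tilde_level N V r par lab c - k"
proof (induction k)
  case 0 then show ?case using c by simp
next
  case (Suc k)
  define B where "B = drop k c @ replicate k (gzero s)"
  have IH: "B \<in> tuples p s N" "tilde_level N V r par lab B = tilde_level N V r par lab c - k"
    using Suc B_def by auto
  have lc: "length c = N" using c by (simp add: tuples_def)
  have eq: "drop (Suc k) c @ replicate (Suc k) (gzero s) = tl B @ [gzero s]"
    using Suc(2) lc unfolding B_def
    by (simp add: drop_Suc tl_drop replicate_append_same[symmetric] drop_tl[symmetric])
  show ?case
  proof (cases "tilde_level N V r par lab B = 0")
    case True
    then have Bz: "B = replicate N (gzero s)" using TL_zero_iff IH(1) by blast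
    then have "tl B @ [gzero s] = B" using N1
      by (metis Suc_diff_1 less_le_trans replicate_Suc replicate_append_same list.sel(3) zero_less_one)
    then show ?thesis using eq IH True by simp
  next
    case False
    obtain w where w: "w \<in> V" "N - 1 \<le> level r par w" "path_labels par lab N w = B" using ex_vert IH(1) by blast
    have lw: "N \<le> level r par w" using TL_eq[OF IH(1) w] False by simp
    have z: "lab ((par ^^ N) w) = gzero s"
      using lv_iter[OF w(1), of N] TL_eq[OF IH(1) w] IH(2) le zero_lab by auto
    show ?thesis using parent[OF IH(1) w lw] z eq IH by simp
  qed
qed

lemma base:
  assumes comp: "compatible p s N V r par lab lam" and c: "c \<in> tuples p s N"
    and le: "tilde_level N V r par lab c \<le> N"
  shows "arr p s N lam 0 c = 1"
proof -
  have "\<And>k. k < N \<Longrightarrow> lam (drop k c @ replicate (k + 1) (gzero s)) = 1"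
  proof -
    fix k assume k: "k < N"
    have "drop k c @ replicate (k + 1) (gzero s) = (drop k c @ replicate k (gzero s)) @ [gzero s]"
      by (simp add: replicate_append_same)
    moreover have "lam ((drop k c @ replicate k (gzero s)) @ [gzero s]) = 1"
      using chain[OF c le, of k] k le by (intro lam_one[OF comp]) auto
    ultimately show "lam (drop k c @ replicate (k + 1) (gzero s)) = 1" by simp
  qed
  then show ?thesis by simp
qed

lemma fin_GF: "finite (GF p s)"
proof -
  have "GF p s \<subseteq> {xs. set xs \<subseteq> {..<p} \<and> length xs = s}" by (auto simp: GF_def)
  moreover have "finite {xs. set xs \<subseteq> {..<p} \<and> length xs = s}" by (rule finite_lists_length_eq) simp
  ultimately show ?thesis by (rule finite_subset)
qed

lemma main:
  assumes comp: "compatible p s N V r par lab lam"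
  shows "\<forall>c\<in>tuples p s N. tilde_level N V r par lab c \<le> N + n \<longrightarrow> arr p s N lam n c = 1"
proof (induction n)
  case 0 then show ?case using base[OF comp] by simp
next
  case (Suc n)
  show ?case
  proof (intro ballI impI)
    fix c assume c: "c \<in> tuples p s N" and le: "tilde_level N V r par lab c \<le> N + Suc n"
    show "arr p s N lam (Suc n) c = 1"
    proof (cases "c = replicate N (gzero s)")
      case True
      have tc: "tl c @ [gzero s] = c" using True N1
        by (metis Suc_diff_1 less_le_trans replicate_Suc replicate_append_same list.sel(3) zero_less_one)
      have l1: "lam (c @ [gzero s]) = 1"
        using True comp1[OF comp] by (simp add: replicate_append_same)
      have a1: "arr p s N lam n c = 1" using Suc c TL_zero_iff[OF c] True by simp
      have rest: "(\<Sum>j\<in>GF p s - {gzero s}. lam (c @ [j]) * arr p s N lam n (tl c @ [j])) = 0"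
        using True comp2[OF comp] by (intro sum.neutral) auto
      show ?thesis
        using sum.remove[OF fin_GF gzero_GF, of "\<lambda>j. lam (c @ [j]) * arr p s N lam n (tl c @ [j])"]
          tc l1 a1 rest by simp
    next
      case False
      define D where "D = Dset p s N V r par lab c"
      have DG: "D \<subseteq> GF p s" by (auto simp: D_def Dset_def)
      have sD: "(\<Sum>d\<in>D. lam (c @ [d])) = 1" and z: "\<And>d. d \<in> GF p s - D \<Longrightarrow> lam (c @ [d]) = 0"
        using comp3[OF comp c False] comp4[OF comp c False] unfolding D_def by auto
      have "(\<Sum>j\<in>GF p s. lam (c @ [j]) * arr p s N lam n (tl c @ [j]))
          = (\<Sum>j\<in>GF p s - D. lam (c @ [j]) * arr p s N lam n (tl c @ [j]))
            + (\<Sum>j\<in>D. lam (c @ [j]) * arr p s N lam n (tl c @ [j]))"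
        by (rule sum.subset_diff[OF DG fin_GF])
      also have "(\<Sum>j\<in>GF p s - D. lam (c @ [j]) * arr p s N lam n (tl c @ [j])) = 0"
        using z by simp
      also have "(\<Sum>j\<in>D. lam (c @ [j]) * arr p s N lam n (tl c @ [j])) = (\<Sum>j\<in>D. lam (c @ [j]))"
      proof (rule sum.cong)
        fix j assume j: "j \<in> D"
        then have jG: "j \<in> GF p s" and lt: "tilde_level N V r par lab (tl c @ [j]) < tilde_level N V r par lab c"
          by (auto simp: D_def Dset_def)
        have "arr p s N lam n (tl c @ [j]) = 1" using Suc tl_tuple[OF c jG] lt le by auto
        then show "lam (c @ [j]) * arr p s N lam n (tl c @ [j]) = lam (c @ [j])" by simp
      qed simp
      finally show ?thesis using sD by simp
    qed
  qed
qed

end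

theorem lemma4p2:
  fixes p s N n :: nat
    and V :: "'v set" and r :: 'v and par :: "'v \<Rightarrow> 'v" and lab :: "'v \<Rightarrow> nat list"
    and \<beta> :: "nat list list \<Rightarrow> complex"
    and i :: "nat list list"
  assumes "prime p" and "1 \<le> s" and "1 \<le> N"
    and "valid_tree p s N V r par lab"
    and "compatible p s N V r par lab (mask_lambda p s N \<beta>)"
    and "i \<in> tuples p s N"
    and "tilde_level N V r par lab i \<le> N + n"
  shows "arr p s N (mask_lambda p s N \<beta>) n i = 1"
proof -
  have "0 < p" using assms(1) prime_gt_0_nat by blast
  then show ?thesis using main[OF assms(4) assms(3) _ assms(5)] assms(6,7) by blast
qed

end
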